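(* Let $\mathbb K$ be $\mathbb R$ or $\mathbb C$ and let $(\mathcal P,\cdot,[\,,\,])$ be a transposed Poisson superalgebra over $\mathbb K$. Let $D:\mathcal P\to\mathcal P$ be an even derivation of the Lie superalgebra $(\mathcal P,[\,,\,])$, i.e. $D$ is linear, $|D(x)|=|x|$ and $D([x,y])=[D(x),y]+[x,D(y)]$ for homogeneous $x,y$. Then for all homogeneous $x,y,z\in\mathcal P$, $$D(x)\cdot D([y,z])+(-1)^{|x|(|y|+|z|)}D(y)\cdot D([z,x])+(-1)^{(|x|+|y|)|z|}D(z)\cdot D([x,y])$$ $$+\,x\cdot[D(y),D(z)]+(-1)^{|x|(|y|+|z|)}\,y\cdot[D(z),D(x)]+(-1)^{(|x|+|y|)|z|}\,z\cdot[D(x),D(y)]=0.$$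
   Context: A transposed Poisson superalgebra is a triple $(\mathcal P,\cdot,[\,,\,])$ where $\mathcal P=\mathcal P_0\oplus\mathcal P_1$ is a super vector space over $\mathbb K$, $(\mathcal P,\cdot)$ is a commutative associative superalgebra, $(\mathcal P,[\,,\,])$ is a Lie superalgebra, and for all homogeneous $x,y,z\in\mathcal P$ one has $2\,z\cdot[x,y]=[z\cdot x,y]+(-1)^{|x||z|}[x,z\cdot y]$. Here $|x|\in\mathbb Z_2$ denotes the parity of a homogeneous element. *)

theory Defs
  imports Complex_Main
begin

definition is_R_or_C :: "'k::field itself \<Rightarrow> bool" where
  "is_R_or_C _ \<longleftrightarrow>
     (\<exists>f::'k \<Rightarrow> real. bij f \<and> (\<forall>a b. f (a + b) = f a + f b) \<and> (\<forall>a b. f (a * b) = f a * f b) \<and> f 1 = 1)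
   \<or> (\<exists>f::'k \<Rightarrow> complex. bij f \<and> (\<forall>a b. f (a + b) = f a + f b) \<and> (\<forall>a b. f (a * b) = f a * f b) \<and> f 1 = 1)"

definition grade :: "'v set \<Rightarrow> 'v set \<Rightarrow> nat \<Rightarrow> 'v set" where
  "grade P0 P1 a = (if a = 0 then P0 else P1)"

definition super_vector_space ::
  "('k::field \<Rightarrow> 'v::ab_group_add \<Rightarrow> 'v) \<Rightarrow> 'v set \<Rightarrow> 'v set \<Rightarrow> bool" where
  "super_vector_space scale P0 P1 \<longleftrightarrow>
     vector_space scale \<and> module.subspace scale P0 \<and> module.subspace scale P1 \<and>
     P0 \<inter> P1 = {0} \<and> (\<forall>v. \<exists>u\<in>P0. \<exists>w\<in>P1. v = u + w)"

definition bilinear_op ::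
  "('k::field \<Rightarrow> 'v::ab_group_add \<Rightarrow> 'v) \<Rightarrow> ('v \<Rightarrow> 'v \<Rightarrow> 'v) \<Rightarrow> bool" where
  "bilinear_op scale m \<longleftrightarrow>
     (\<forall>x y z. m (x + y) z = m x z + m y z) \<and> (\<forall>x y z. m x (y + z) = m x y + m x z) \<and>
     (\<forall>c x y. m (scale c x) y = scale c (m x y)) \<and> (\<forall>c x y. m x (scale c y) = scale c (m x y))"

definition graded_op :: "'v set \<Rightarrow> 'v set \<Rightarrow> ('v \<Rightarrow> 'v \<Rightarrow> 'v) \<Rightarrow> bool" where
  "graded_op P0 P1 m \<longleftrightarrow>
     (\<forall>a<2. \<forall>b<2. \<forall>x\<in>grade P0 P1 a. \<forall>y\<in>grade P0 P1 b. m x y \<in> grade P0 P1 ((a + b) mod 2))"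

definition comm_assoc_superalgebra ::
  "('k::field \<Rightarrow> 'v::ab_group_add \<Rightarrow> 'v) \<Rightarrow> 'v set \<Rightarrow> 'v set \<Rightarrow> ('v \<Rightarrow> 'v \<Rightarrow> 'v) \<Rightarrow> bool" where
  "comm_assoc_superalgebra scale P0 P1 m \<longleftrightarrow>
     super_vector_space scale P0 P1 \<and> bilinear_op scale m \<and> graded_op P0 P1 m \<and>
     (\<forall>x y z. m (m x y) z = m x (m y z)) \<and>
     (\<forall>a<2. \<forall>b<2. \<forall>x\<in>grade P0 P1 a. \<forall>y\<in>grade P0 P1 b.
        m x y = scale ((-1) ^ (a * b)) (m y x))"

definition lie_superalgebra ::
  "('k::field \<Rightarrow> 'v::ab_group_add \<Rightarrow> 'v) \<Rightarrow> 'v set \<Rightarrow> 'v set \<Rightarrow> ('v \<Rightarrow> 'v \<Rightarrow> 'v) \<Rightarrow> bool" where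
  "lie_superalgebra scale P0 P1 br \<longleftrightarrow>
     super_vector_space scale P0 P1 \<and> bilinear_op scale br \<and> graded_op P0 P1 br \<and>
     (\<forall>a<2. \<forall>b<2. \<forall>x\<in>grade P0 P1 a. \<forall>y\<in>grade P0 P1 b.
        br x y = - scale ((-1) ^ (a * b)) (br y x)) \<and>
     (\<forall>a<2. \<forall>b<2. \<forall>c<2. \<forall>x\<in>grade P0 P1 a. \<forall>y\<in>grade P0 P1 b. \<forall>z\<in>grade P0 P1 c.
        br x (br y z) = br (br x y) z + scale ((-1) ^ (a * b)) (br y (br x z)))"

definition transposed_poisson_superalgebra ::
  "('k::field \<Rightarrow> 'v::ab_group_add \<Rightarrow> 'v) \<Rightarrow> 'v set \<Rightarrow> 'v set \<Rightarrow> ('v \<Rightarrow> 'v \<Rightarrow> 'v) \<Rightarrow> ('v \<Rightarrow> 'v \<Rightarrow> 'v) \<Rightarrow> bool" where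
  "transposed_poisson_superalgebra scale P0 P1 m br \<longleftrightarrow>
     comm_assoc_superalgebra scale P0 P1 m \<and> lie_superalgebra scale P0 P1 br \<and>
     (\<forall>a<2. \<forall>b<2. \<forall>c<2. \<forall>x\<in>grade P0 P1 a. \<forall>y\<in>grade P0 P1 b. \<forall>z\<in>grade P0 P1 c.
        scale 2 (m z (br x y)) = br (m z x) y + scale ((-1) ^ (a * c)) (br x (m z y)))"

definition even_derivation ::
  "('k::field \<Rightarrow> 'v::ab_group_add \<Rightarrow> 'v) \<Rightarrow> 'v set \<Rightarrow> 'v set \<Rightarrow> ('v \<Rightarrow> 'v \<Rightarrow> 'v) \<Rightarrow> ('v \<Rightarrow> 'v) \<Rightarrow> bool" where
  "even_derivation scale P0 P1 br D \<longleftrightarrow>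
     Vector_Spaces.linear scale scale D \<and> D ` P0 \<subseteq> P0 \<and> D ` P1 \<subseteq> P1 \<and>
     (\<forall>a<2. \<forall>b<2. \<forall>x\<in>grade P0 P1 a. \<forall>y\<in>grade P0 P1 b.
        D (br x y) = br (D x) y + br x (D y))"

end

theory Submission
  imports Defs
begin

lemma grade_cases: "(n::nat) < 2 \<Longrightarrow> n = 0 \<or> n = 1" by auto

lemma cyc:
  fixes scale :: "'k::field \<Rightarrow> 'v::ab_group_add \<Rightarrow> 'v"
  assumes two: "(2::'k) \<noteq> 0"
    and TP: "transposed_poisson_superalgebra scale P0 P1 m br"
    and pq: "p < 2" "q < 2" "r < 2"
    and uvw: "u \<in> grade P0 P1 p" "v \<in> grade P0 P1 q" "w \<in> grade P0 P1 r"
  shows "m u (br v w) + scale ((-1) ^ (p * (q + r))) (m v (br w u))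
         + scale ((-1) ^ ((p + q) * r)) (m w (br u v)) = 0"
proof -
  have CA: "comm_assoc_superalgebra scale P0 P1 m" and LS: "lie_superalgebra scale P0 P1 br"
    and CP: "\<forall>a<2. \<forall>b<2. \<forall>c<2. \<forall>x\<in>grade P0 P1 a. \<forall>y\<in>grade P0 P1 b. \<forall>z\<in>grade P0 P1 c.
        scale 2 (m z (br x y)) = br (m z x) y + scale ((-1) ^ (a * c)) (br x (m z y))"
    using TP unfolding transposed_poisson_superalgebra_def by auto
  have VS: "vector_space scale" using CA by (simp add: comm_assoc_superalgebra_def super_vector_space_def)
  interpret vector_space scale by (rule VS)
  have BL: "bilinear_op scale br" and GM: "graded_op P0 P1 m"
    and AS: "\<forall>a<2. \<forall>b<2. \<forall>x\<in>grade P0 P1 a. \<forall>y\<in>grade P0 P1 b.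
        br x y = - scale ((-1) ^ (a * b)) (br y x)"
    and CM: "\<forall>a<2. \<forall>b<2. \<forall>x\<in>grade P0 P1 a. \<forall>y\<in>grade P0 P1 b.
        m x y = scale ((-1) ^ (a * b)) (m y x)"
    using CA LS unfolding comm_assoc_superalgebra_def lie_superalgebra_def by blast+
  have brs: "\<And>c x y. br x (scale c y) = scale c (br x y)" "\<And>c x y. br (scale c x) y = scale c (br x y)" using BL unfolding bilinear_op_def by auto
  have g1: "m u v \<in> grade P0 P1 ((p+q) mod 2)" "m u w \<in> grade P0 P1 ((p+r) mod 2)"
    "m v w \<in> grade P0 P1 ((q+r) mod 2)"
    using GM[unfolded graded_op_def, rule_format] pq uvw by auto
  have m2: "(p+q) mod 2 < 2" "(p+r) mod 2 < 2" "(q+r) mod 2 < 2" by auto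
  have C1: "scale 2 (m u (br v w)) = br (m u v) w + scale ((-1)^(q*p)) (br v (m u w))"
    using CP[rule_format, OF pq(2) pq(3) pq(1) uvw(2) uvw(3) uvw(1)] .
  have C2: "scale 2 (m v (br w u)) = br (m v w) u + scale ((-1)^(r*q)) (br w (m v u))"
    using CP[rule_format, OF pq(3) pq(1) pq(2) uvw(3) uvw(1) uvw(2)] .
  have C3: "scale 2 (m w (br u v)) = br (m w u) v + scale ((-1)^(p*r)) (br u (m w v))"
    using CP[rule_format, OF pq(1) pq(2) pq(3) uvw(1) uvw(2) uvw(3)] .
  have M1: "m v u = scale ((-1)^(q*p)) (m u v)" using CM[rule_format, OF pq(2) pq(1) uvw(2) uvw(1)] .
  have M2: "m w u = scale ((-1)^(r*p)) (m u w)" using CM[rule_format, OF pq(3) pq(1) uvw(3) uvw(1)] .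
  have M3: "m w v = scale ((-1)^(r*q)) (m v w)" using CM[rule_format, OF pq(3) pq(2) uvw(3) uvw(2)] .
  have A1: "br w (m u v) = - scale ((-1)^(r*((p+q) mod 2))) (br (m u v) w)"
    using AS[rule_format, OF pq(3) m2(1) uvw(3) g1(1)] .
  have A2: "br (m u w) v = - scale ((-1)^(((p+r) mod 2)*q)) (br v (m u w))"
    using AS[rule_format, OF m2(2) pq(2) g1(2) uvw(2)] .
  have A3: "br u (m v w) = - scale ((-1)^(p*((q+r) mod 2))) (br (m v w) u)"
    using AS[rule_format, OF pq(1) m2(3) uvw(1) g1(3)] .
  define S where "S = m u (br v w) + scale ((-1) ^ (p * (q + r))) (m v (br w u))
         + scale ((-1) ^ ((p + q) * r)) (m w (br u v))"
  have "scale 2 S = scale 2 (m u (br v w)) + scale ((-1) ^ (p * (q + r))) (scale 2 (m v (br w u)))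
         + scale ((-1) ^ ((p + q) * r)) (scale 2 (m w (br u v)))"
    unfolding S_def by (simp add: scale_right_distrib mult.commute)
  also have "\<dots> = 0"
    unfolding C1 C2 C3 M1 M2 M3 brs A1 A2 A3
    using grade_cases[OF pq(1)] grade_cases[OF pq(2)] grade_cases[OF pq(3)]
    by (elim disjE; simp add: scale_right_distrib)
  finally have "scale 2 S = 0" .
  then have "(2::'k) = 0 \<or> S = 0" by simp
  with two have "S = 0" by blast
  then show ?thesis unfolding S_def .
qed

theorem lemma7:
  fixes scale :: "'k::field \<Rightarrow> 'v::ab_group_add \<Rightarrow> 'v"
    and P0 P1 :: "'v set"
    and m br :: "'v \<Rightarrow> 'v \<Rightarrow> 'v"
    and D :: "'v \<Rightarrow> 'v"
    and a b c :: nat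
    and x y z :: 'v
  assumes "is_R_or_C TYPE('k)"
    and "transposed_poisson_superalgebra scale P0 P1 m br"
    and "even_derivation scale P0 P1 br D"
    and "a < 2" "b < 2" "c < 2"
    and "x \<in> grade P0 P1 a" "y \<in> grade P0 P1 b" "z \<in> grade P0 P1 c"
  shows "m (D x) (D (br y z))
         + scale ((-1) ^ (a * (b + c))) (m (D y) (D (br z x)))
         + scale ((-1) ^ ((a + b) * c)) (m (D z) (D (br x y)))
         + m x (br (D y) (D z))
         + scale ((-1) ^ (a * (b + c))) (m y (br (D z) (D x)))
         + scale ((-1) ^ ((a + b) * c)) (m z (br (D x) (D y))) = 0"
proof -
  have two: "(2::'k) \<noteq> 0"
  proof
    assume h: "(2::'k) = 0"
    from assms(1) show False unfolding is_R_or_C_def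
    proof (elim disjE exE conjE)
      fix f :: "'k \<Rightarrow> real"
      assume ad: "\<forall>a b. f (a + b) = f a + f b" and o: "f 1 = 1"
      have "f 0 = 0" using ad[rule_format, of 0 0] by simp
      moreover have "f (1 + 1) = 2" using ad[rule_format, of 1 1] o by simp
      ultimately show False using h by (simp add: one_add_one)
    next
      fix f :: "'k \<Rightarrow> complex"
      assume ad: "\<forall>a b. f (a + b) = f a + f b" and o: "f 1 = 1"
      have "f 0 = 0" using ad[rule_format, of 0 0] by simp
      moreover have "f (1 + 1) = 2" using ad[rule_format, of 1 1] o by simp
      ultimately show False using h by (simp add: one_add_one)
    qed
  qed
  note TP = assms(2)
  have CA: "comm_assoc_superalgebra scale P0 P1 m"
    using conjunct1[OF TP[unfolded transposed_poisson_superalgebra_def]] .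
  have VS: "vector_space scale" using CA by (simp add: comm_assoc_superalgebra_def super_vector_space_def)
  interpret vector_space scale by (rule VS)
  have BL: "bilinear_op scale m" using conjunct1[OF conjunct2[OF CA[unfolded comm_assoc_superalgebra_def]]] .
  have madd: "\<And>x y z. m x (y + z) = m x y + m x z" using BL unfolding bilinear_op_def by blast
  note EDd = assms(3)[unfolded even_derivation_def]
  have ED1: "D ` P0 \<subseteq> P0" using conjunct1[OF conjunct2[OF EDd]] .
  have ED2: "D ` P1 \<subseteq> P1" using conjunct1[OF conjunct2[OF conjunct2[OF EDd]]] .
  note ED = ED1 ED2
  have DD: "\<forall>a<2. \<forall>b<2. \<forall>x\<in>grade P0 P1 a. \<forall>y\<in>grade P0 P1 b.
        D (br x y) = br (D x) y + br x (D y)" using conjunct2[OF conjunct2[OF conjunct2[OF EDd]]] .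
  have Dg: "\<And>n u. u \<in> grade P0 P1 n \<Longrightarrow> D u \<in> grade P0 P1 n"
    using ED unfolding grade_def by auto
  have g: "D x \<in> grade P0 P1 a" "D y \<in> grade P0 P1 b" "D z \<in> grade P0 P1 c"
    using Dg assms(7-9) by auto
  have E1: "D (br y z) = br (D y) z + br y (D z)" using DD[rule_format, OF assms(5) assms(6) assms(8) assms(9)] .
  have E2: "D (br z x) = br (D z) x + br z (D x)" using DD[rule_format, OF assms(6) assms(4) assms(9) assms(7)] .
  have E3: "D (br x y) = br (D x) y + br x (D y)" using DD[rule_format, OF assms(4) assms(5) assms(7) assms(8)] .
  have H1: "m (D x) (br (D y) z) + scale ((-1) ^ (a * (b + c))) (m (D y) (br z (D x)))
         + scale ((-1) ^ ((a + b) * c)) (m z (br (D x) (D y))) = 0"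
    by (rule cyc[OF two TP assms(4-6) g(1) g(2) assms(9)])
  have H2: "m (D y) (br (D z) x) + scale ((-1) ^ (b * (c + a))) (m (D z) (br x (D y)))
         + scale ((-1) ^ ((b + c) * a)) (m x (br (D y) (D z))) = 0"
    by (rule cyc[OF two TP assms(5) assms(6) assms(4) g(2) g(3) assms(7)])
  have H3: "m (D z) (br (D x) y) + scale ((-1) ^ (c * (a + b))) (m (D x) (br y (D z)))
         + scale ((-1) ^ ((c + a) * b)) (m y (br (D z) (D x))) = 0"
    by (rule cyc[OF two TP assms(6) assms(4) assms(5) g(3) g(1) assms(8)])
  have "m (D x) (D (br y z))
         + scale ((-1) ^ (a * (b + c))) (m (D y) (D (br z x)))
         + scale ((-1) ^ ((a + b) * c)) (m (D z) (D (br x y)))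
         + m x (br (D y) (D z))
         + scale ((-1) ^ (a * (b + c))) (m y (br (D z) (D x)))
         + scale ((-1) ^ ((a + b) * c)) (m z (br (D x) (D y)))
       = (m (D x) (br (D y) z) + scale ((-1) ^ (a * (b + c))) (m (D y) (br z (D x)))
         + scale ((-1) ^ ((a + b) * c)) (m z (br (D x) (D y))))
       + scale ((-1) ^ ((a + b) * c)) (m (D z) (br (D x) y) + scale ((-1) ^ (c * (a + b))) (m (D x) (br y (D z)))
         + scale ((-1) ^ ((c + a) * b)) (m y (br (D z) (D x))))
       + scale ((-1) ^ (a * (b + c))) (m (D y) (br (D z) x) + scale ((-1) ^ (b * (c + a))) (m (D z) (br x (D y)))
         + scale ((-1) ^ ((b + c) * a)) (m x (br (D y) (D z))))"
    unfolding E1 E2 E3 madd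
    using grade_cases[OF assms(4)] grade_cases[OF assms(5)] grade_cases[OF assms(6)]
    apply (elim disjE; simp add: scale_right_distrib)
    done
  also have "\<dots> = 0" unfolding H1 H2 H3 by simp
  finally show ?thesis .
qed

end
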